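(* Let $(A,\boxdot,e)$ be a mosaic which is $\rho$-reversible for the endofunction $\rho:A\to A$. Then for every $x\in A$, $\rho(x)$ is the unique inverse of $x$ in $A$.
   Context: A multioperation on $A$ is a function $\boxdot:A\times A\to\wp(A)$. An element $e$ is neutral if $e\boxdot x=x\boxdot e=\{x\}$ for all $x\in A$. $(A,\boxdot)$ is $\rho$-reversible if for all $x,y,z\in A$, $z\in x\boxdot y$ implies both $x\in z\boxdot\rho(y)$ and $y\in\rho(x)\boxdot z$. A mosaic is a set with a multioperation having a neutral element and $\rho$-reversible for some endofunction $\rho$. An inverse of $x$ is an element $y\in A$ with $e\in(x\boxdot y)\cap(y\boxdot x)$. *)

theory Defs
  imports Main
begin

definition multiop :: "'a set \<Rightarrow> ('a \<Rightarrow> 'a \<Rightarrow> 'a set) \<Rightarrow> bool" where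
  "multiop A m \<longleftrightarrow> (\<forall>x\<in>A. \<forall>y\<in>A. m x y \<subseteq> A)"

definition neutral :: "'a set \<Rightarrow> ('a \<Rightarrow> 'a \<Rightarrow> 'a set) \<Rightarrow> 'a \<Rightarrow> bool" where
  "neutral A m e \<longleftrightarrow> e \<in> A \<and> (\<forall>x\<in>A. m e x = {x} \<and> m x e = {x})"

definition reversible :: "'a set \<Rightarrow> ('a \<Rightarrow> 'a \<Rightarrow> 'a set) \<Rightarrow> ('a \<Rightarrow> 'a) \<Rightarrow> bool" where
  "reversible A m \<rho> \<longleftrightarrow> (\<forall>x\<in>A. \<rho> x \<in> A) \<and>
     (\<forall>x\<in>A. \<forall>y\<in>A. \<forall>z\<in>A. z \<in> m x y \<longrightarrow> x \<in> m z (\<rho> y) \<and> y \<in> m (\<rho> x) z)"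

definition mosaic :: "'a set \<Rightarrow> ('a \<Rightarrow> 'a \<Rightarrow> 'a set) \<Rightarrow> 'a \<Rightarrow> ('a \<Rightarrow> 'a) \<Rightarrow> bool" where
  "mosaic A m e \<rho> \<longleftrightarrow> multiop A m \<and> neutral A m e \<and> reversible A m \<rho>"

definition is_inverse :: "'a set \<Rightarrow> ('a \<Rightarrow> 'a \<Rightarrow> 'a set) \<Rightarrow> 'a \<Rightarrow> 'a \<Rightarrow> 'a \<Rightarrow> bool" where
  "is_inverse A m e x y \<longleftrightarrow> y \<in> A \<and> e \<in> m x y \<inter> m y x"

end

theory Submission
  imports Defs
begin

theorem mainTheorem20:
  fixes A :: "'a set" and m :: "'a \<Rightarrow> 'a \<Rightarrow> 'a set" and e :: 'a and \<rho> :: "'a \<Rightarrow> 'a"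
  assumes "mosaic A m e \<rho>"
  shows "\<forall>x\<in>A. is_inverse A m e x (\<rho> x) \<and> (\<forall>y. is_inverse A m e x y \<longrightarrow> y = \<rho> x)"
proof
  fix x assume x: "x \<in> A"
  have eA: "e \<in> A" and N: "\<And>z. z \<in> A \<Longrightarrow> m e z = {z} \<and> m z e = {z}"
    using assms by (auto simp: mosaic_def neutral_def)
  have rA: "\<And>z. z \<in> A \<Longrightarrow> \<rho> z \<in> A" using assms by (auto simp: mosaic_def reversible_def)
  have R: "\<And>a b c. a \<in> A \<Longrightarrow> b \<in> A \<Longrightarrow> c \<in> A \<Longrightarrow> c \<in> m a b \<Longrightarrow> a \<in> m c (\<rho> b) \<and> b \<in> m (\<rho> a) c"
  proof -
    fix a b c assume "a \<in> A" "b \<in> A" "c \<in> A" "c \<in> m a b"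
    have "reversible A m \<rho>" using assms by (simp add: mosaic_def)
    then show "a \<in> m c (\<rho> b) \<and> b \<in> m (\<rho> a) c"
      unfolding reversible_def using \<open>a \<in> A\<close> \<open>b \<in> A\<close> \<open>c \<in> A\<close> \<open>c \<in> m a b\<close> by simp
  qed
  have "x \<in> m x e" using N[OF x] by simp
  hence 1: "e \<in> m (\<rho> x) x" using R[OF x eA x] by simp
  have "x \<in> m e x" using N[OF x] by simp
  hence 2: "e \<in> m x (\<rho> x)" using R[OF eA x x] by simp
  have 3: "\<forall>y. is_inverse A m e x y \<longrightarrow> y = \<rho> x"
  proof (intro allI impI)
    fix y assume "is_inverse A m e x y"
    hence y: "y \<in> A" and "e \<in> m x y" by (auto simp: is_inverse_def)
    hence "y \<in> m (\<rho> x) e" using R[OF x y eA] by simp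
    thus "y = \<rho> x" using N[OF rA[OF x]] by simp
  qed
  show "is_inverse A m e x (\<rho> x) \<and> (\<forall>y. is_inverse A m e x y \<longrightarrow> y = \<rho> x)"
  proof
    show "is_inverse A m e x (\<rho> x)" unfolding is_inverse_def using 1 2 rA[OF x] by simp
  qed (rule 3)
qed

end
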